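(* Let $\Bbbk$ be a field, $S=\Bbbk[x_1,\ldots,x_n]$, $\prec$ a monomial order on $S$, $P=\{p_1,\ldots,p_m\}\subset\Bbbk^n$ distinct points, and $B$ the set of monomials outside $\mathrm{in}_\prec(I(P))$. Let $E=\{x_{i_1},\ldots,x_{i_{\bar n}}\}$ be a subset of the variables with $\mathrm{supp}(B)\subseteq E$, $|E|\le\min(m-1,n)$ and $E(P)$ of rank $|E|$. Let $\pi:\Bbbk^n\to\Bbbk^{\bar n}$, $\pi(a_1,\ldots,a_n)=(a_{i_1},\ldots,a_{i_{\bar n}})$, let $T=\Bbbk[y_{i_1},\ldots,y_{i_{\bar n}}]$ and $\pi^*:T\to S$ the monomorphism $y_{i_j}\mapsto x_{i_j}$. Let $\prec'$ be the monomial order on $T$ with $y^\alpha\prec'y^\beta$ iff $\pi^*(y^\alpha)\prec\pi^*(y^\beta)$, and let $B'$ be the set of monomials outside $\mathrm{in}_{\prec'}(I(\pi(P)))$. Then $\pi^*(B')=B$.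
   Context: $I(Q)$ denotes the vanishing ideal of a finite point set $Q$; $\mathrm{in}_\prec(I)$ is the ideal generated by leading monomials. The support of a set of monomials is the set of variables occurring with positive exponent in some of them. $E(P)$ is the $|E|\times m$ matrix whose rows are the evaluation vectors $(x(p_1),\ldots,x(p_m))$, $x\in E$. *)

theory Defs
  imports "HOL-Library.Poly_Mapping" "Jordan_Normal_Form.DL_Rank"
begin





type_synonym mon = "nat \<Rightarrow>\<^sub>0 nat"
type_synonym 'a mpoly = "mon \<Rightarrow>\<^sub>0 'a"

definition mons :: "nat \<Rightarrow> mon set" where
  "mons n = {\<alpha>. Poly_Mapping.keys \<alpha> \<subseteq> {..<n}}"

definition polys :: "nat \<Rightarrow> ('a::zero) mpoly set" where
  "polys n = {f. \<forall>\<alpha>\<in>Poly_Mapping.keys f. \<alpha> \<in> mons n}"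

definition eval_mon :: "mon \<Rightarrow> ('a::comm_semiring_1) list \<Rightarrow> 'a" where
  "eval_mon \<alpha> p = (\<Prod>i\<in>Poly_Mapping.keys \<alpha>. (p ! i) ^ Poly_Mapping.lookup \<alpha> i)"

definition eval :: "('a::comm_semiring_1) mpoly \<Rightarrow> 'a list \<Rightarrow> 'a" where
  "eval f p = (\<Sum>\<alpha>\<in>Poly_Mapping.keys f. Poly_Mapping.lookup f \<alpha> * eval_mon \<alpha> p)"

definition vanishing_ideal :: "nat \<Rightarrow> ('a::comm_semiring_1) list set \<Rightarrow> 'a mpoly set" where
  "vanishing_ideal n Q = {f \<in> polys n. \<forall>p\<in>Q. eval f p = 0}"

definition monomial_order :: "nat \<Rightarrow> (mon \<Rightarrow> mon \<Rightarrow> bool) \<Rightarrow> bool" where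
  "monomial_order n ord \<longleftrightarrow>
     (\<forall>\<alpha>\<in>mons n. \<not> ord \<alpha> \<alpha>) \<and>
     (\<forall>\<alpha>\<in>mons n. \<forall>\<beta>\<in>mons n. \<forall>\<gamma>\<in>mons n. ord \<alpha> \<beta> \<longrightarrow> ord \<beta> \<gamma> \<longrightarrow> ord \<alpha> \<gamma>) \<and>
     (\<forall>\<alpha>\<in>mons n. \<forall>\<beta>\<in>mons n. \<alpha> = \<beta> \<or> ord \<alpha> \<beta> \<or> ord \<beta> \<alpha>) \<and>
     (\<forall>\<alpha>\<in>mons n. \<alpha> \<noteq> 0 \<longrightarrow> ord 0 \<alpha>) \<and>
     (\<forall>\<alpha>\<in>mons n. \<forall>\<beta>\<in>mons n. \<forall>\<gamma>\<in>mons n. ord \<alpha> \<beta> \<longrightarrow> ord (\<alpha> + \<gamma>) (\<beta> + \<gamma>))"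

definition lead_mon :: "(mon \<Rightarrow> mon \<Rightarrow> bool) \<Rightarrow> ('a::zero) mpoly \<Rightarrow> mon" where
  "lead_mon ord f = (THE \<alpha>. \<alpha> \<in> Poly_Mapping.keys f \<and> (\<forall>\<beta>\<in>Poly_Mapping.keys f. \<beta> \<noteq> \<alpha> \<longrightarrow> ord \<beta> \<alpha>))"

definition gen_ideal :: "nat \<Rightarrow> ('a::comm_ring_1) mpoly set \<Rightarrow> 'a mpoly set" where
  "gen_ideal n G = {f. \<exists>A h. finite A \<and> A \<subseteq> G \<and> (\<forall>g\<in>A. h g \<in> polys n) \<and>
                          f = (\<Sum>g\<in>A. h g * g)}"

definition initial_ideal :: "nat \<Rightarrow> (mon \<Rightarrow> mon \<Rightarrow> bool) \<Rightarrow> ('a::comm_ring_1) mpoly set \<Rightarrow> 'a mpoly set" where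
  "initial_ideal n ord I =
     gen_ideal n {Poly_Mapping.single (lead_mon ord f) 1 | f. f \<in> I \<and> f \<noteq> 0}"

definition std_mons :: "nat \<Rightarrow> (mon \<Rightarrow> mon \<Rightarrow> bool) \<Rightarrow> ('a::comm_ring_1) mpoly set \<Rightarrow> mon set" where
  "std_mons n ord I =
     {\<alpha> \<in> mons n. (Poly_Mapping.single \<alpha> (1::'a)) \<notin> initial_ideal n ord I}"

definition supp :: "mon set \<Rightarrow> nat set" where
  "supp B = (\<Union>\<alpha>\<in>B. Poly_Mapping.keys \<alpha>)"

text \<open>Projection pi(a) = (a_{i_1},...,a_{i_nbar}) for the index list es = [i_1,...,i_nbar].\<close>
definition proj :: "nat list \<Rightarrow> 'a list \<Rightarrow> 'a list" where
  "proj es a = map (\<lambda>i. a ! i) es"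

text \<open>pi^* on monomials: y_j (standing for y_{i_j}) \<mapsto> x_{i_j}.\<close>
definition pistar_mon :: "nat list \<Rightarrow> mon \<Rightarrow> mon" where
  "pistar_mon es \<beta> = (\<Sum>j<length es. Poly_Mapping.single (es ! j) (Poly_Mapping.lookup \<beta> j))"

definition pulled_order :: "nat list \<Rightarrow> (mon \<Rightarrow> mon \<Rightarrow> bool) \<Rightarrow> mon \<Rightarrow> mon \<Rightarrow> bool" where
  "pulled_order es ord \<beta> \<gamma> \<longleftrightarrow> ord (pistar_mon es \<beta>) (pistar_mon es \<gamma>)"

definition eval_matrix :: "nat list \<Rightarrow> 'a list list \<Rightarrow> 'a mat" where
  "eval_matrix es ps = mat (length es) (length ps) (\<lambda>(r, c). (ps ! c) ! (es ! r))"

end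

theory Submission
  imports Defs
begin

inductive_set lspan :: "('b \<Rightarrow> 'a::field) set \<Rightarrow> ('b \<Rightarrow> 'a) set" for D where
  lspan_zero: "(\<lambda>_. 0) \<in> lspan D"
| lspan_add: "v \<in> D \<Longrightarrow> w \<in> lspan D \<Longrightarrow> (\<lambda>p. c * v p + w p) \<in> lspan D"

lemma lspan_base: "v \<in> D \<Longrightarrow> v \<in> lspan D"
proof -
  assume "v \<in> D"
  then have "(\<lambda>p. 1 * v p + 0) \<in> lspan D" using lspan_add[of v D "\<lambda>_. 0" 1] lspan_zero by blast
  then show ?thesis by simp
qed

lemma lspan_plus: "u \<in> lspan D \<Longrightarrow> w \<in> lspan D \<Longrightarrow> (\<lambda>p. u p + w p) \<in> lspan D"
proof (induction u rule: lspan.induct)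
  case lspan_zero then show ?case by simp
next
  case (lspan_add v w' c)
  then have "(\<lambda>p. c * v p + (w' p + w p)) \<in> lspan D" by (intro lspan.lspan_add) auto
  then show ?case by (simp add: add.assoc)
qed

lemma lspan_scale: "u \<in> lspan D \<Longrightarrow> (\<lambda>p. c * u p) \<in> lspan D"
proof (induction u rule: lspan.induct)
  case lspan_zero then show ?case by (simp add: lspan.lspan_zero)
next
  case (lspan_add v w' d)
  then have "(\<lambda>p. (c * d) * v p + c * w' p) \<in> lspan D" by (intro lspan.lspan_add) auto
  then show ?case by (simp add: algebra_simps)
qed

lemma lspan_trans: assumes "D \<subseteq> lspan E" shows "lspan D \<subseteq> lspan E"
proof
  fix u assume "u \<in> lspan D"
  then show "u \<in> lspan E"
  proof (induction u rule: lspan.induct)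
    case lspan_zero then show ?case by (rule lspan.lspan_zero)
  next
    case (lspan_add v w c)
    then show ?case using assms by (intro lspan_plus lspan_scale) auto
  qed
qed

lemma lspan_mono: "D \<subseteq> E \<Longrightarrow> lspan D \<subseteq> lspan E"
  by (rule lspan_trans) (auto intro: lspan_base)

lemma lspan_sum: "finite A \<Longrightarrow> f ` A \<subseteq> D \<Longrightarrow> (\<lambda>p. \<Sum>x\<in>A. c x * f x p) \<in> lspan D"
proof (induction A rule: finite_induct)
  case empty then show ?case by (simp add: lspan.lspan_zero)
next
  case (insert x A)
  then have "(\<lambda>p. c x * f x p + (\<Sum>x\<in>A. c x * f x p)) \<in> lspan D" by (intro lspan.lspan_add) auto
  then show ?case using insert by simp
qed

lemma lspan_repr: "v \<in> lspan (f ` M) \<Longrightarrow> \<exists>A c. finite A \<and> A \<subseteq> M \<and> v = (\<lambda>p. \<Sum>x\<in>A. c x * f x p)"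
proof (induction v rule: lspan.induct)
  case lspan_zero then show ?case by (intro exI[of _ "{}"]) auto
next
  case (lspan_add v w c)
  then obtain A e where A: "finite A" "A \<subseteq> M" "w = (\<lambda>p. \<Sum>x\<in>A. e x * f x p)" by blast
  from lspan_add obtain y where y: "y \<in> M" "v = f y" by blast
  define e' where "e' = e(y := c + (if y \<in> A then e y else 0))"
  have "(\<lambda>p. c * v p + w p) = (\<lambda>p. \<Sum>x\<in>insert y A. e' x * f x p)"
  proof
    fix p
    have s: "(\<Sum>x\<in>A - {y}. e' x * f x p) = (\<Sum>x\<in>A - {y}. e x * f x p)"
      by (rule sum.cong) (auto simp: e'_def)
    show "c * v p + w p = (\<Sum>x\<in>insert y A. e' x * f x p)"
    proof (cases "y \<in> A")
      case True
      then have "(\<Sum>x\<in>A. e x * f x p) = e y * f y p + (\<Sum>x\<in>A - {y}. e x * f x p)"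
        using A(1) by (simp add: sum.remove)
      moreover have "(\<Sum>x\<in>insert y A. e' x * f x p) = e' y * f y p + (\<Sum>x\<in>A - {y}. e' x * f x p)"
        using A(1) True by (simp add: insert_absorb sum.remove)
      ultimately show ?thesis using s A(3) y True by (simp add: e'_def algebra_simps)
    next
      case False
      then have "(\<Sum>x\<in>A. e' x * f x p) = (\<Sum>x\<in>A. e x * f x p)"
        by (intro sum.cong) (auto simp: e'_def)
      then show ?thesis using False A y by (simp add: e'_def)
    qed
  qed
  then show ?case using A y by (intro exI[of _ "insert y A"] exI[of _ e']) auto
qed

lemma lspan_image:
  assumes lin: "\<And>c v w. \<Phi> (\<lambda>p. c * v p + w p) = (\<lambda>p. c * \<Phi> v p + \<Phi> w p)"
    and z: "\<Phi> (\<lambda>_. 0) = (\<lambda>_. 0)"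
  shows "v \<in> lspan D \<Longrightarrow> \<Phi> v \<in> lspan (\<Phi> ` D)"
  by (induction v rule: lspan.induct) (auto simp: lin z intro: lspan.intros)

lemma lspan_preimage:
  assumes lin: "\<And>c v w. \<Phi> (\<lambda>p. c * v p + w p) = (\<lambda>p. c * \<Phi> v p + \<Phi> w p)"
    and z: "\<Phi> (\<lambda>_. 0) = (\<lambda>_. 0)"
  shows "u \<in> lspan (\<Phi> ` D) \<Longrightarrow> \<exists>v\<in>lspan D. u = \<Phi> v"
proof (induction u rule: lspan.induct)
  case lspan_zero then show ?case using z lspan.lspan_zero by metis
next
  case (lspan_add v w c)
  then obtain d v' where "d \<in> D" "v = \<Phi> d" "v' \<in> lspan D" "w = \<Phi> v'" by blast
  then show ?case using lin by (intro bexI[of _ "\<lambda>p. c * d p + v' p"]) (auto intro: lspan.intros)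
qed

lemma lspan_vanish: "v \<in> lspan D \<Longrightarrow> (\<And>d x. d \<in> D \<Longrightarrow> x \<notin> Q \<Longrightarrow> d x = 0) \<Longrightarrow> x \<notin> Q \<Longrightarrow> v x = 0"
  by (induction v rule: lspan.induct) auto

lemma lspan_mult: "v \<in> lspan D \<Longrightarrow> (\<lambda>p. u p * v p) \<in> lspan ((\<lambda>d p. u p * d p) ` D)"
proof (induction v rule: lspan.induct)
  case lspan_zero then show ?case by (simp add: lspan.lspan_zero)
next
  case (lspan_add v w c)
  then have "(\<lambda>p. c * (u p * v p) + u p * w p) \<in> lspan ((\<lambda>d p. u p * d p) ` D)"
    by (intro lspan.lspan_add) auto
  then show ?case by (simp add: algebra_simps)
qed


section \<open>Monomials\<close>

lemma eval_mon_superset: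
  "finite K \<Longrightarrow> Poly_Mapping.keys \<alpha> \<subseteq> K \<Longrightarrow> eval_mon \<alpha> p = (\<Prod>i\<in>K. (p ! i) ^ Poly_Mapping.lookup \<alpha> i)"
  unfolding eval_mon_def by (rule prod.mono_neutral_left) (auto simp: in_keys_iff)

lemma eval_mon_add: "eval_mon (\<alpha> + \<beta>) p = eval_mon \<alpha> p * eval_mon \<beta> p"
proof -
  let ?K = "Poly_Mapping.keys \<alpha> \<union> Poly_Mapping.keys \<beta>"
  have "eval_mon (\<alpha> + \<beta>) p = (\<Prod>i\<in>?K. (p ! i) ^ Poly_Mapping.lookup (\<alpha> + \<beta>) i)"
    by (rule eval_mon_superset) (auto simp: keys_add)
  also have "\<dots> = (\<Prod>i\<in>?K. (p ! i) ^ Poly_Mapping.lookup \<alpha> i) * (\<Prod>i\<in>?K. (p ! i) ^ Poly_Mapping.lookup \<beta> i)"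
    by (simp add: lookup_add power_add prod.distrib)
  also have "\<dots> = eval_mon \<alpha> p * eval_mon \<beta> p"
    by (simp add: eval_mon_superset[of ?K])
  finally show ?thesis .
qed

lemma lookup_pistar:
  "Poly_Mapping.lookup (pistar_mon es \<beta>) i = (\<Sum>j<length es. if es ! j = i then Poly_Mapping.lookup \<beta> j else 0)"
  unfolding pistar_mon_def by (simp add: lookup_sum lookup_single when_def)

lemma lookup_pistar_nth:
  assumes "distinct es" "j < length es"
  shows "Poly_Mapping.lookup (pistar_mon es \<beta>) (es ! j) = Poly_Mapping.lookup \<beta> j"
proof -
  have "Poly_Mapping.lookup (pistar_mon es \<beta>) (es ! j) = (\<Sum>j'<length es. if j' = j then Poly_Mapping.lookup \<beta> j' else 0)"
    unfolding lookup_pistar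
  proof (intro sum.cong refl)
    fix j' assume "j' \<in> {..<length es}"
    then have "(es ! j' = es ! j) = (j' = j)" using assms nth_eq_iff_index_eq by auto
    then show "(if es ! j' = es ! j then Poly_Mapping.lookup \<beta> j' else 0) = (if j' = j then Poly_Mapping.lookup \<beta> j' else 0)"
      by simp
  qed
  also have "\<dots> = Poly_Mapping.lookup \<beta> j" using assms by simp
  finally show ?thesis .
qed

lemma lookup_pistar_notin:
  "i \<notin> set es \<Longrightarrow> Poly_Mapping.lookup (pistar_mon es \<beta>) i = 0"
  unfolding lookup_pistar by (intro sum.neutral) (auto simp del: nth_mem dest: nth_mem)

lemma keys_pistar: "Poly_Mapping.keys (pistar_mon es \<beta>) \<subseteq> set es"
  using lookup_pistar_notin by (metis in_keys_iff subsetI)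

lemma pistar_mons: "set es \<subseteq> {..<n} \<Longrightarrow> pistar_mon es \<beta> \<in> mons n"
  using keys_pistar unfolding mons_def by blast

lemma pistar_add: "pistar_mon es (a + b) = pistar_mon es a + pistar_mon es b"
  by (rule poly_mapping_eqI) (unfold lookup_add lookup_pistar sum.distrib[symmetric], rule sum.cong, auto)

lemma pistar_zero: "pistar_mon es 0 = 0"
  by (rule poly_mapping_eqI) (simp add: lookup_pistar)

lemma pistar_inj:
  assumes "distinct es" "a \<in> mons (length es)" "b \<in> mons (length es)" "pistar_mon es a = pistar_mon es b"
  shows "a = b"
proof (rule poly_mapping_eqI)
  fix j
  show "Poly_Mapping.lookup a j = Poly_Mapping.lookup b j"
  proof (cases "j < length es")
    case True
    then show ?thesis using lookup_pistar_nth[OF assms(1) True, of a] lookup_pistar_nth[OF assms(1) True, of b] assms(4)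
      by simp
  next
    case False
    then have "j \<notin> Poly_Mapping.keys a" "j \<notin> Poly_Mapping.keys b" using assms(2,3) unfolding mons_def by auto
    then show ?thesis by (simp add: in_keys_iff)
  qed
qed

lemma pistar_surj:
  assumes "distinct es" "Poly_Mapping.keys \<gamma> \<subseteq> set es"
  shows "\<exists>a\<in>mons (length es). pistar_mon es a = \<gamma>"
proof -
  define a where "a = (\<Sum>j<length es. Poly_Mapping.single j (Poly_Mapping.lookup \<gamma> (es ! j)))"
  have la: "Poly_Mapping.lookup a j = (if j < length es then Poly_Mapping.lookup \<gamma> (es ! j) else 0)" for j
    unfolding a_def by (simp add: lookup_sum lookup_single when_def)
  have "a \<in> mons (length es)" unfolding mons_def by (auto simp: in_keys_iff la split: if_splits)
  moreover have "pistar_mon es a = \<gamma>"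
  proof (rule poly_mapping_eqI)
    fix i
    show "Poly_Mapping.lookup (pistar_mon es a) i = Poly_Mapping.lookup \<gamma> i"
    proof (cases "i \<in> set es")
      case True
      then obtain j where "j < length es" "i = es ! j" by (auto simp: in_set_conv_nth)
      then show ?thesis using lookup_pistar_nth[OF assms(1)] la by simp
    next
      case False
      then show ?thesis using assms(2) lookup_pistar_notin[OF False] by (auto simp: in_keys_iff)
    qed
  qed
  ultimately show ?thesis by blast
qed

lemma eval_pistar:
  assumes "distinct es" "a \<in> mons (length es)"
  shows "eval_mon (pistar_mon es a) p = eval_mon a (proj es p)"
proof -
  have "eval_mon (pistar_mon es a) p = (\<Prod>i\<in>set es. (p ! i) ^ Poly_Mapping.lookup (pistar_mon es a) i)"
    by (rule eval_mon_superset) (auto simp: keys_pistar)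
  also have "set es = (\<lambda>j. es ! j) ` {..<length es}" by (auto simp: in_set_conv_nth)
  also have "(\<Prod>i\<in>(\<lambda>j. es ! j) ` {..<length es}. (p ! i) ^ Poly_Mapping.lookup (pistar_mon es a) i)
      = (\<Prod>j<length es. (p ! (es ! j)) ^ Poly_Mapping.lookup (pistar_mon es a) (es ! j))"
    by (subst prod.reindex) (auto intro: inj_on_nth[OF assms(1)])
  also have "\<dots> = (\<Prod>j<length es. (proj es p ! j) ^ Poly_Mapping.lookup a j)"
    by (intro prod.cong) (auto simp: lookup_pistar_nth[OF assms(1)] proj_def)
  also have "\<dots> = eval_mon a (proj es p)"
    using assms(2) by (intro eval_mon_superset[symmetric]) (auto simp: mons_def)
  finally show ?thesis .
qed


lemma mons_zero: "0 \<in> mons n" by (simp add: mons_def)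

lemma mons_add: "\<alpha> \<in> mons n \<Longrightarrow> \<beta> \<in> mons n \<Longrightarrow> \<alpha> + \<beta> \<in> mons n"
  unfolding mons_def using keys_add[of \<alpha> \<beta>] by blast


section \<open>Dickson\<close>

definition upseq :: "(nat \<Rightarrow> nat) \<Rightarrow> bool" where
  "upseq X \<longleftrightarrow> (\<forall>m m'. m \<le> m' \<longrightarrow> X m \<le> X m')"

lemma sm_le: "strict_mono r \<Longrightarrow> m \<le> m' \<Longrightarrow> r m \<le> (r m' :: nat)"
  by (metis le_less strict_mono_def)

lemma sm_comp: "strict_mono (r :: nat \<Rightarrow> nat) \<Longrightarrow> strict_mono s \<Longrightarrow> strict_mono (r \<circ> s)"
  by (simp add: strict_mono_def)

lemma nat_upseq_subseq: fixes g :: "nat \<Rightarrow> nat" shows "\<exists>r. strict_mono r \<and> upseq (\<lambda>k. g (r k))"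
proof -
  obtain r where r: "strict_mono r" "monoseq (\<lambda>k. g (r k))" using seq_monosub[of g] by blast
  show ?thesis
  proof (cases "\<forall>m. \<forall>k\<ge>m. g (r m) \<le> g (r k)")
    case True
    then have "upseq (\<lambda>k. g (r k))" unfolding upseq_def by simp
    then show ?thesis using r(1) by blast
  next
    case False
    then have dec: "\<forall>m. \<forall>k\<ge>m. g (r k) \<le> g (r m)" using r(2) unfolding monoseq_def by blast
    define v where "v = (LEAST v. \<exists>k. g (r k) = v)"
    have "\<exists>k. g (r k) = v" unfolding v_def by (rule LeastI_ex) blast
    then obtain N where N: "g (r N) = v" by blast
    have low: "v \<le> g (r k)" for k unfolding v_def by (rule Least_le) blast
    have const: "g (r (k + N)) = v" for k
    proof -
      have "g (r (k + N)) \<le> g (r N)" using dec by simp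
      then show ?thesis using low[of "k + N"] N by simp
    qed
    have "strict_mono (\<lambda>k. r (k + N))" using r(1) by (simp add: strict_mono_def)
    moreover have "upseq (\<lambda>k. g (r (k + N)))" unfolding upseq_def using const by simp
    ultimately show ?thesis by blast
  qed
qed

lemma dickson_aux: fixes f :: "nat \<Rightarrow> mon" and d :: nat shows
  "\<exists>r. strict_mono r \<and> (\<forall>l<d. upseq (\<lambda>k. Poly_Mapping.lookup (f (r k)) l))"
proof (induction d)
  case 0 then show ?case by (intro exI[of _ id]) (simp add: strict_mono_def)
next
  case (Suc d)
  then obtain r where r: "strict_mono r" "\<forall>l<d. upseq (\<lambda>k. Poly_Mapping.lookup (f (r k)) l)" by blast
  obtain s where s: "strict_mono s" "upseq (\<lambda>k. Poly_Mapping.lookup (f (r (s k))) d)"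
    using nat_upseq_subseq[of "\<lambda>k. Poly_Mapping.lookup (f (r k)) d"] by blast
  have "\<forall>l<Suc d. upseq (\<lambda>k. Poly_Mapping.lookup (f (r (s k))) l)"
  proof (intro allI impI)
    fix l assume "l < Suc d"
    then consider "l < d" | "l = d" by linarith
    then show "upseq (\<lambda>k. Poly_Mapping.lookup (f (r (s k))) l)"
    proof cases
      case 1
      then show ?thesis using r(2) sm_le[OF s(1)] unfolding upseq_def by blast
    next
      case 2 then show ?thesis using s(2) by simp
    qed
  qed
  moreover have "strict_mono (r \<circ> s)" by (rule sm_comp[OF r(1) s(1)])
  ultimately show ?case by (intro exI[of _ "r \<circ> s"]) (simp add: comp_def)
qed

lemma dickson: fixes f :: "nat \<Rightarrow> mon"
  assumes "\<forall>i. f i \<in> mons n"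
  shows "\<exists>i j. i < j \<and> (\<forall>l. Poly_Mapping.lookup (f i) l \<le> Poly_Mapping.lookup (f j) l)"
proof -
  obtain r where r: "strict_mono r" "\<forall>l<n. upseq (\<lambda>k. Poly_Mapping.lookup (f (r k)) l)"
    using dickson_aux[of n f] by blast
  have "\<forall>l. Poly_Mapping.lookup (f (r 0)) l \<le> Poly_Mapping.lookup (f (r 1)) l"
  proof
    fix l show "Poly_Mapping.lookup (f (r 0)) l \<le> Poly_Mapping.lookup (f (r 1)) l"
    proof (cases "l < n")
      case True then show ?thesis using r(2) unfolding upseq_def by auto
    next
      case False
      then have "l \<notin> Poly_Mapping.keys (f (r 0))" using assms unfolding mons_def by auto
      then show ?thesis by (simp add: in_keys_iff)
    qed
  qed
  moreover have "r 0 < r 1" using r(1) by (simp add: strict_mono_def)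
  ultimately show ?thesis by blast
qed

definition evm :: "'a list set \<Rightarrow> mon \<Rightarrow> 'a list \<Rightarrow> 'a::comm_semiring_1" where
  "evm P \<alpha> = (\<lambda>p. if p \<in> P then eval_mon \<alpha> p else 0)"

lemma eval_superset:
  "finite K \<Longrightarrow> Poly_Mapping.keys f \<subseteq> K \<Longrightarrow> eval f p = (\<Sum>\<gamma>\<in>K. Poly_Mapping.lookup f \<gamma> * eval_mon \<gamma> p)"
  unfolding eval_def by (rule sum.mono_neutral_left) (auto simp: in_keys_iff)

context
  fixes n :: nat and ord :: "mon \<Rightarrow> mon \<Rightarrow> bool"
  assumes mo: "monomial_order n ord"
begin

lemma mo_irrefl: "\<alpha> \<in> mons n \<Longrightarrow> \<not> ord \<alpha> \<alpha>"
  using mo unfolding monomial_order_def by blast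
lemma mo_trans: "\<alpha> \<in> mons n \<Longrightarrow> \<beta> \<in> mons n \<Longrightarrow> \<gamma> \<in> mons n \<Longrightarrow> ord \<alpha> \<beta> \<Longrightarrow> ord \<beta> \<gamma> \<Longrightarrow> ord \<alpha> \<gamma>"
  using mo unfolding monomial_order_def by blast
lemma mo_total: "\<alpha> \<in> mons n \<Longrightarrow> \<beta> \<in> mons n \<Longrightarrow> \<alpha> = \<beta> \<or> ord \<alpha> \<beta> \<or> ord \<beta> \<alpha>"
  using mo unfolding monomial_order_def by blast
lemma mo_zero: "\<alpha> \<in> mons n \<Longrightarrow> \<alpha> \<noteq> 0 \<Longrightarrow> ord 0 \<alpha>"
  using mo unfolding monomial_order_def by blast
lemma mo_add: "\<alpha> \<in> mons n \<Longrightarrow> \<beta> \<in> mons n \<Longrightarrow> \<gamma> \<in> mons n \<Longrightarrow> ord \<alpha> \<beta> \<Longrightarrow> ord (\<alpha> + \<gamma>) (\<beta> + \<gamma>)"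
  using mo unfolding monomial_order_def by blast

lemma max_exists:
  "finite K \<Longrightarrow> K \<noteq> {} \<Longrightarrow> K \<subseteq> mons n \<Longrightarrow> \<exists>\<alpha>\<in>K. \<forall>\<beta>\<in>K. \<beta> \<noteq> \<alpha> \<longrightarrow> ord \<beta> \<alpha>"
proof (induction K rule: finite_ne_induct)
  case (singleton x) then show ?case by auto
next
  case (insert x F)
  then obtain \<alpha> where a: "\<alpha> \<in> F" "\<forall>\<beta>\<in>F. \<beta> \<noteq> \<alpha> \<longrightarrow> ord \<beta> \<alpha>" by auto
  show ?case
  proof (cases "ord x \<alpha>")
    case True then show ?thesis using a insert by auto
  next
    case False
    then have "ord \<alpha> x" using mo_total[of x \<alpha>] insert a by auto
    have "\<forall>\<beta>\<in>insert x F. \<beta> \<noteq> x \<longrightarrow> ord \<beta> x"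
    proof (intro ballI impI)
      fix \<beta> assume b: "\<beta> \<in> insert x F" "\<beta> \<noteq> x"
      then have bF: "\<beta> \<in> F" by simp
      show "ord \<beta> x"
      proof (cases "\<beta> = \<alpha>")
        case True then show ?thesis using \<open>ord \<alpha> x\<close> by simp
      next
        case False
        then have "ord \<beta> \<alpha>" using a bF by simp
        moreover have "\<beta> \<in> mons n" "\<alpha> \<in> mons n" "x \<in> mons n" using insert.prems bF a(1) by auto
        ultimately show ?thesis using mo_trans \<open>ord \<alpha> x\<close> by metis
      qed
    qed
    then show ?thesis by blast
  qed
qed

lemma max_unique:
  "K \<subseteq> mons n \<Longrightarrow> \<alpha> \<in> K \<Longrightarrow> \<forall>\<beta>\<in>K. \<beta> \<noteq> \<alpha> \<longrightarrow> ord \<beta> \<alpha> \<Longrightarrow>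
   \<alpha>' \<in> K \<Longrightarrow> \<forall>\<beta>\<in>K. \<beta> \<noteq> \<alpha>' \<longrightarrow> ord \<beta> \<alpha>' \<Longrightarrow> \<alpha> = \<alpha>'"
proof (rule ccontr)
  assume h: "K \<subseteq> mons n" "\<alpha> \<in> K" "\<forall>\<beta>\<in>K. \<beta> \<noteq> \<alpha> \<longrightarrow> ord \<beta> \<alpha>" "\<alpha>' \<in> K"
    "\<forall>\<beta>\<in>K. \<beta> \<noteq> \<alpha>' \<longrightarrow> ord \<beta> \<alpha>'" "\<alpha> \<noteq> \<alpha>'"
  then have "ord \<alpha>' \<alpha>" "ord \<alpha> \<alpha>'" by auto
  moreover have "\<alpha> \<in> mons n" "\<alpha>' \<in> mons n" using h by auto
  ultimately show False using mo_trans mo_irrefl by metis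
qed

lemma lead_mon_eq:
  assumes "f \<in> polys n" "\<alpha> \<in> Poly_Mapping.keys f" "\<forall>\<beta>\<in>Poly_Mapping.keys f. \<beta> \<noteq> \<alpha> \<longrightarrow> ord \<beta> \<alpha>"
  shows "lead_mon ord f = \<alpha>"
proof -
  have K: "Poly_Mapping.keys f \<subseteq> mons n" using assms(1) unfolding polys_def by blast
  show ?thesis unfolding lead_mon_def
  proof (rule the_equality)
    show "\<alpha> \<in> Poly_Mapping.keys f \<and> (\<forall>\<beta>\<in>Poly_Mapping.keys f. \<beta> \<noteq> \<alpha> \<longrightarrow> ord \<beta> \<alpha>)" using assms by simp
  next
    fix x assume "x \<in> Poly_Mapping.keys f \<and> (\<forall>\<beta>\<in>Poly_Mapping.keys f. \<beta> \<noteq> x \<longrightarrow> ord \<beta> x)"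
    then show "x = \<alpha>" using max_unique[OF K] assms(2,3) by blast
  qed
qed

lemma lead_mon_max:
  assumes "f \<in> polys n" "f \<noteq> 0"
  shows "lead_mon ord f \<in> Poly_Mapping.keys f \<and> (\<forall>\<beta>\<in>Poly_Mapping.keys f. \<beta> \<noteq> lead_mon ord f \<longrightarrow> ord \<beta> (lead_mon ord f))"
proof -
  have K: "Poly_Mapping.keys f \<subseteq> mons n" using assms(1) unfolding polys_def by blast
  obtain \<alpha> where "\<alpha> \<in> Poly_Mapping.keys f" "\<forall>\<beta>\<in>Poly_Mapping.keys f. \<beta> \<noteq> \<alpha> \<longrightarrow> ord \<beta> \<alpha>"
    using max_exists[OF _ _ K] assms(2) by auto
  then show ?thesis using lead_mon_eq[OF assms(1)] by simp
qed


lemma red_of_ideal: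
  fixes f :: "'a::field mpoly"
  assumes fI: "f \<in> vanishing_ideal n P" and f0: "f \<noteq> 0"
  shows "evm P (lead_mon ord f) \<in> lspan (evm P ` {\<beta> \<in> mons n. ord \<beta> (lead_mon ord f)})"
proof -
  let ?\<mu> = "lead_mon ord f"
  have fp: "f \<in> polys n" using fI unfolding vanishing_ideal_def by blast
  have lm: "?\<mu> \<in> Poly_Mapping.keys f" "\<forall>\<beta>\<in>Poly_Mapping.keys f. \<beta> \<noteq> ?\<mu> \<longrightarrow> ord \<beta> ?\<mu>"
    using lead_mon_max[OF fp f0] by auto
  define c where "c = Poly_Mapping.lookup f ?\<mu>"
  have c0: "c \<noteq> 0" using lm(1) by (simp add: c_def in_keys_iff)
  define K where "K = Poly_Mapping.keys f - {?\<mu>}"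
  have finK: "finite K" by (simp add: K_def)
  have eq: "evm P ?\<mu> = (\<lambda>p. \<Sum>\<beta>\<in>K. (- Poly_Mapping.lookup f \<beta> / c) * evm P \<beta> p)"
  proof
    fix p
    show "evm P ?\<mu> p = (\<Sum>\<beta>\<in>K. (- Poly_Mapping.lookup f \<beta> / c) * evm P \<beta> p)"
    proof (cases "p \<in> P")
      case True
      let ?S = "\<Sum>\<beta>\<in>K. Poly_Mapping.lookup f \<beta> * eval_mon \<beta> p"
      have "0 = eval f p" using fI True unfolding vanishing_ideal_def by auto
      also have "eval f p = c * eval_mon ?\<mu> p + ?S"
        unfolding eval_def K_def c_def using lm(1) by (simp add: sum.remove)
      finally have e: "c * eval_mon ?\<mu> p = - ?S" by (simp add: eq_neg_iff_add_eq_0)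
      have "(\<Sum>\<beta>\<in>K. (- Poly_Mapping.lookup f \<beta> / c) * evm P \<beta> p) = (- 1 / c) * ?S"
        using True by (simp add: evm_def sum_distrib_left)
      also have "\<dots> = eval_mon ?\<mu> p" using e c0 by (simp add: field_simps)
      finally show ?thesis using True by (simp add: evm_def)
    qed (simp add: evm_def)
  qed
  have "K \<subseteq> {\<beta> \<in> mons n. ord \<beta> ?\<mu>}" using lm fp unfolding K_def polys_def by auto
  then show ?thesis unfolding eq by (intro lspan_sum finK) auto
qed

lemma nonstd_red:
  assumes am: "\<alpha> \<in> mons n"
    and mem: "Poly_Mapping.single \<alpha> (1::'a::field) \<in> initial_ideal n ord (vanishing_ideal n P)"
  shows "evm P \<alpha> \<in> lspan (evm P ` {\<beta> \<in> mons n. ord \<beta> \<alpha>})"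
proof -
  obtain A h where A: "finite A"
    "A \<subseteq> {Poly_Mapping.single (lead_mon ord f) 1 | f. f \<in> vanishing_ideal n P \<and> f \<noteq> 0}"
    "\<forall>g\<in>A. h g \<in> polys n" "Poly_Mapping.single \<alpha> (1::'a) = (\<Sum>g\<in>A. h g * g)"
    using mem unfolding initial_ideal_def gen_ideal_def by blast
  have "(\<Sum>g\<in>A. Poly_Mapping.lookup (h g * g) \<alpha>) = 1"
    using arg_cong[OF A(4), of "\<lambda>q. Poly_Mapping.lookup q \<alpha>"] by (simp add: lookup_sum)
  then have "\<exists>g\<in>A. Poly_Mapping.lookup (h g * g) \<alpha> \<noteq> 0"
  proof (rule contrapos_pp)
    assume "\<not> (\<exists>g\<in>A. Poly_Mapping.lookup (h g * g) \<alpha> \<noteq> 0)"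
    then have "(\<Sum>g\<in>A. Poly_Mapping.lookup (h g * g) \<alpha>) = 0" by (intro sum.neutral) blast
    then show "(\<Sum>g\<in>A. Poly_Mapping.lookup (h g * g) \<alpha>) \<noteq> 1" by simp
  qed
  then obtain g where g: "g \<in> A" "Poly_Mapping.lookup (h g * g) \<alpha> \<noteq> 0" by blast
  obtain f where f: "g = Poly_Mapping.single (lead_mon ord f) 1" "f \<in> vanishing_ideal n P" "f \<noteq> 0"
    using A(2) g(1) by blast
  let ?\<mu> = "lead_mon ord f"
  have "\<alpha> \<in> Poly_Mapping.keys (h g * g)" using g(2) by (simp add: in_keys_iff)
  then have "\<alpha> \<in> {a + b | a b. a \<in> Poly_Mapping.keys (h g) \<and> b \<in> Poly_Mapping.keys g}"
    using keys_mult[of "h g" g] by blast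
  then obtain a b where ab: "\<alpha> = a + b" "a \<in> Poly_Mapping.keys (h g)" "b \<in> Poly_Mapping.keys g" by blast
  moreover have "Poly_Mapping.keys g = {?\<mu>}" using f(1) by simp
  ultimately have a: "a \<in> Poly_Mapping.keys (h g)" "\<alpha> = a + ?\<mu>" by auto
  have am': "a \<in> mons n" using a(1) A(3) g(1) unfolding polys_def by blast
  have fp: "f \<in> polys n" using f(2) unfolding vanishing_ideal_def by blast
  have mum: "?\<mu> \<in> mons n" using lead_mon_max[OF fp f(3)] fp unfolding polys_def by blast
  have R: "evm P ?\<mu> \<in> lspan (evm P ` {\<beta> \<in> mons n. ord \<beta> ?\<mu>})"
    by (rule red_of_ideal[OF f(2,3)])
  have L: "(\<lambda>p. evm P a p * evm P ?\<mu> p) \<in> lspan ((\<lambda>d p. evm P a p * d p) ` evm P ` {\<beta> \<in> mons n. ord \<beta> ?\<mu>})"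
    by (rule lspan_mult[OF R])
  have E: "(\<lambda>p. evm P a p * evm P ?\<mu> p) = evm P \<alpha>"
    by (auto simp: evm_def a(2) eval_mon_add)
  have S: "(\<lambda>d p. evm P a p * d p) ` evm P ` {\<beta> \<in> mons n. ord \<beta> ?\<mu>} \<subseteq> evm P ` {\<beta> \<in> mons n. ord \<beta> \<alpha>}"
  proof
    fix u assume "u \<in> (\<lambda>d p. evm P a p * d p) ` evm P ` {\<beta> \<in> mons n. ord \<beta> ?\<mu>}"
    then obtain \<gamma> where \<gamma>: "\<gamma> \<in> mons n" "ord \<gamma> ?\<mu>" "u = (\<lambda>p. evm P a p * evm P \<gamma> p)" by auto
    have "u = evm P (a + \<gamma>)" using \<gamma>(3) by (auto simp: evm_def eval_mon_add)
    moreover have "a + \<gamma> \<in> mons n" using am' \<gamma>(1) by (rule mons_add)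
    moreover have "ord (a + \<gamma>) \<alpha>"
      using mo_add[OF \<gamma>(1) mum am' \<gamma>(2)] a(2) by (simp add: add.commute)
    ultimately show "u \<in> evm P ` {\<beta> \<in> mons n. ord \<beta> \<alpha>}" by blast
  qed
  have "evm P \<alpha> \<in> lspan ((\<lambda>d p. evm P a p * d p) ` evm P ` {\<beta> \<in> mons n. ord \<beta> ?\<mu>})"
    using L unfolding E .
  then show ?thesis using lspan_mono[OF S] by (rule subsetD[rotated])
qed

lemma red_nonstd:
  assumes am: "\<alpha> \<in> mons n"
    and red: "evm P \<alpha> \<in> lspan (evm P ` {\<beta> \<in> mons n. ord \<beta> \<alpha>})"
  shows "Poly_Mapping.single \<alpha> (1::'a::field) \<in> initial_ideal n ord (vanishing_ideal n P)"
proof -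
  obtain A c where A: "finite A" "A \<subseteq> {\<beta> \<in> mons n. ord \<beta> \<alpha>}"
    "evm P \<alpha> = (\<lambda>p. \<Sum>x\<in>A. c x * evm P x p)"
    using lspan_repr[OF red] by blast
  define f :: "'a mpoly" where "f = Poly_Mapping.single \<alpha> 1 - (\<Sum>\<beta>\<in>A. Poly_Mapping.single \<beta> (c \<beta>))"
  have lf: "Poly_Mapping.lookup f \<gamma> = (if \<gamma> = \<alpha> then 1 else 0) - (if \<gamma> \<in> A then c \<gamma> else 0)" for \<gamma>
    using A(1) by (simp add: f_def lookup_minus lookup_sum lookup_single when_def)
  have aA: "\<alpha> \<notin> A" using A(2) mo_irrefl[OF am] by auto
  have kf: "Poly_Mapping.keys f \<subseteq> insert \<alpha> A" by (auto simp: in_keys_iff lf split: if_splits)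
  have fp: "f \<in> polys n" using kf A(2) am unfolding polys_def by blast
  have af: "\<alpha> \<in> Poly_Mapping.keys f" using aA by (simp add: in_keys_iff lf)
  then have f0: "f \<noteq> 0" by auto
  have lmf: "lead_mon ord f = \<alpha>"
    by (rule lead_mon_eq[OF fp af]) (use kf A(2) in blast)
  have fI: "f \<in> vanishing_ideal n P"
    unfolding vanishing_ideal_def
  proof (intro CollectI conjI ballI fp)
    fix p assume pP: "p \<in> P"
    have ev: "eval_mon \<alpha> p = (\<Sum>x\<in>A. c x * eval_mon x p)"
      using fun_cong[OF A(3), of p] pP by (simp add: evm_def)
    have "eval f p = (\<Sum>\<gamma>\<in>insert \<alpha> A. Poly_Mapping.lookup f \<gamma> * eval_mon \<gamma> p)"
      by (rule eval_superset) (use A(1) kf in auto)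
    also have "\<dots> = eval_mon \<alpha> p + (\<Sum>\<gamma>\<in>A. (- c \<gamma>) * eval_mon \<gamma> p)"
      using A(1) aA by (simp add: lf) (intro sum.cong, auto)
    also have "\<dots> = 0" using ev by (simp add: sum_negf)
    finally show "eval f p = 0" .
  qed
  have "Poly_Mapping.single \<alpha> 1 \<in> {Poly_Mapping.single (lead_mon ord f) 1 | f. f \<in> vanishing_ideal n P \<and> f \<noteq> (0::'a mpoly)}"
    using fI f0 lmf by force
  moreover have "(1::'a mpoly) \<in> polys n" unfolding polys_def by (simp add: mons_zero)
  ultimately show ?thesis unfolding initial_ideal_def gen_ideal_def
    by (intro CollectI exI[of _ "{Poly_Mapping.single \<alpha> (1::'a)}"] exI[of _ "\<lambda>_. 1"]) auto
qed

lemma std_char: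
  "std_mons n ord (vanishing_ideal n P :: 'a::field mpoly set) =
     {\<alpha> \<in> mons n. evm P \<alpha> \<notin> lspan (evm P ` {\<beta> \<in> mons n. ord \<beta> \<alpha>})}"
  unfolding std_mons_def using nonstd_red red_nonstd by blast


lemma chain_ord:
  assumes "\<forall>i. f i \<in> mons n" "\<forall>i. ord (f (Suc i)) (f i)"
  shows "i < j \<Longrightarrow> ord (f j) (f i)"
proof (induction j)
  case 0 then show ?case by simp
next
  case (Suc j)
  show ?case
  proof (cases "i = j")
    case True then show ?thesis using assms(2) by simp
  next
    case False
    then have "ord (f j) (f i)" using Suc by simp
    then show ?thesis using assms mo_trans by metis
  qed
qed

lemma mo_wf: "wf {(\<beta>, \<alpha>). \<beta> \<in> mons n \<and> \<alpha> \<in> mons n \<and> ord \<beta> \<alpha>}"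
  unfolding wf_iff_no_infinite_down_chain
proof
  assume "\<exists>f. \<forall>i. (f (Suc i), f i) \<in> {(\<beta>, \<alpha>). \<beta> \<in> mons n \<and> \<alpha> \<in> mons n \<and> ord \<beta> \<alpha>}"
  then obtain f where f: "\<forall>i. f i \<in> mons n" "\<forall>i. ord (f (Suc i)) (f i)" by auto
  obtain i j where ij: "i < j" "\<forall>l. Poly_Mapping.lookup (f i) l \<le> Poly_Mapping.lookup (f j) l"
    using dickson[OF f(1)] by blast
  have c: "ord (f j) (f i)" by (rule chain_ord[OF f ij(1)])
  define \<gamma> where "\<gamma> = f j - f i"
  have fj: "f j = f i + \<gamma>"
    by (rule poly_mapping_eqI) (use ij(2) in \<open>simp add: \<gamma>_def lookup_add lookup_minus\<close>)
  have gm: "\<gamma> \<in> mons n"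
  proof -
    have "Poly_Mapping.keys \<gamma> \<subseteq> Poly_Mapping.keys (f j)"
      by (auto simp: \<gamma>_def in_keys_iff lookup_minus)
    then show ?thesis using f(1) unfolding mons_def by blast
  qed
  show False
  proof (cases "\<gamma> = 0")
    case True
    then show False using c fj mo_irrefl f(1) by simp
  next
    case False
    then have "ord 0 \<gamma>" using mo_zero gm by blast
    then have "ord (0 + f i) (\<gamma> + f i)" using mo_add[OF mons_zero gm] f(1) by blast
    then have "ord (f i) (f j)" using fj by (simp add: add.commute)
    then show False using c mo_trans mo_irrefl f(1) by metis
  qed
qed

lemma std_span:
  fixes P :: "'a::field list set"
  defines "B \<equiv> std_mons n ord (vanishing_ideal n P :: 'a mpoly set)"
  shows "\<beta> \<in> mons n \<Longrightarrow> evm P \<beta> \<in> lspan (evm P ` {\<gamma> \<in> B. \<gamma> = \<beta> \<or> ord \<gamma> \<beta>})"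
proof (induction \<beta> rule: wf_induct[OF mo_wf])
  case (1 \<beta>)
  show ?case
  proof (cases "\<beta> \<in> B")
    case True then show ?thesis by (intro lspan_base) auto
  next
    case False
    then have red: "evm P \<beta> \<in> lspan (evm P ` {\<delta> \<in> mons n. ord \<delta> \<beta>})"
      using 1(2) unfolding B_def std_char by blast
    have Bm: "B \<subseteq> mons n" unfolding B_def std_mons_def by blast
    have "evm P ` {\<delta> \<in> mons n. ord \<delta> \<beta>} \<subseteq> lspan (evm P ` {\<gamma> \<in> B. \<gamma> = \<beta> \<or> ord \<gamma> \<beta>})"
    proof
      fix u assume "u \<in> evm P ` {\<delta> \<in> mons n. ord \<delta> \<beta>}"
      then obtain \<delta> where d: "\<delta> \<in> mons n" "ord \<delta> \<beta>" "u = evm P \<delta>" by blast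
      have "(\<delta>, \<beta>) \<in> {(\<beta>, \<alpha>). \<beta> \<in> mons n \<and> \<alpha> \<in> mons n \<and> ord \<beta> \<alpha>}" using d 1(2) by simp
      then have IH: "evm P \<delta> \<in> lspan (evm P ` {\<gamma> \<in> B. \<gamma> = \<delta> \<or> ord \<gamma> \<delta>})"
        using 1(1) d(1) by blast
      have sub: "{\<gamma> \<in> B. \<gamma> = \<delta> \<or> ord \<gamma> \<delta>} \<subseteq> {\<gamma> \<in> B. \<gamma> = \<beta> \<or> ord \<gamma> \<beta>}"
      proof
        fix \<gamma> assume g: "\<gamma> \<in> {\<gamma> \<in> B. \<gamma> = \<delta> \<or> ord \<gamma> \<delta>}"
        then have gm: "\<gamma> \<in> mons n" using Bm by blast
        have "ord \<gamma> \<beta>"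
        proof (cases "\<gamma> = \<delta>")
          case True then show ?thesis using d(2) by simp
        next
          case False
          then have "ord \<gamma> \<delta>" using g by simp
          then show ?thesis using mo_trans[OF gm d(1) 1(2)] d(2) by simp
        qed
        then show "\<gamma> \<in> {\<gamma> \<in> B. \<gamma> = \<beta> \<or> ord \<gamma> \<beta>}" using g by simp
      qed
      have "lspan (evm P ` {\<gamma> \<in> B. \<gamma> = \<delta> \<or> ord \<gamma> \<delta>}) \<subseteq> lspan (evm P ` {\<gamma> \<in> B. \<gamma> = \<beta> \<or> ord \<gamma> \<beta>})"
        by (rule lspan_mono, rule image_mono, rule sub)
      then show "u \<in> lspan (evm P ` {\<gamma> \<in> B. \<gamma> = \<beta> \<or> ord \<gamma> \<beta>})"
        using IH d(3) by (simp add: subset_iff)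
    qed
    then have "lspan (evm P ` {\<delta> \<in> mons n. ord \<delta> \<beta>}) \<subseteq> lspan (evm P ` {\<gamma> \<in> B. \<gamma> = \<beta> \<or> ord \<gamma> \<beta>})"
      by (rule lspan_trans)
    then show ?thesis using red by (rule subsetD)
  qed
qed

end


lemma pulled_mo:
  assumes mo: "monomial_order n ord" and ev: "set es \<subseteq> {..<n}" and ed: "distinct es"
  shows "monomial_order (length es) (pulled_order es ord)"
proof -
  let ?k = "length es"
  have pm: "\<And>a. pistar_mon es a \<in> mons n" using pistar_mons[OF ev] .
  have inj: "\<And>a b. a \<in> mons ?k \<Longrightarrow> b \<in> mons ?k \<Longrightarrow> pistar_mon es a = pistar_mon es b \<Longrightarrow> a = b"
    using pistar_inj[OF ed] by blast
  show ?thesis unfolding monomial_order_def pulled_order_def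
  proof (intro conjI ballI impI)
    fix a assume "a \<in> mons ?k"
    show "\<not> ord (pistar_mon es a) (pistar_mon es a)" using mo_irrefl[OF mo pm] .
  next
    fix a b c assume "ord (pistar_mon es a) (pistar_mon es b)" "ord (pistar_mon es b) (pistar_mon es c)"
    then show "ord (pistar_mon es a) (pistar_mon es c)" using mo_trans[OF mo pm pm pm] by blast
  next
    fix a b assume ab: "a \<in> mons ?k" "b \<in> mons ?k"
    show "a = b \<or> ord (pistar_mon es a) (pistar_mon es b) \<or> ord (pistar_mon es b) (pistar_mon es a)"
      using mo_total[OF mo pm pm, of a b] inj[OF ab] by blast
  next
    fix a assume a: "a \<in> mons ?k" "a \<noteq> 0"
    have "pistar_mon es a \<noteq> 0" using inj[OF a(1) mons_zero] a(2) pistar_zero by metis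
    then show "ord (pistar_mon es 0) (pistar_mon es a)" using mo_zero[OF mo pm] pistar_zero by metis
  next
    fix a b c assume "ord (pistar_mon es a) (pistar_mon es b)"
    then show "ord (pistar_mon es (a + c)) (pistar_mon es (b + c))"
      unfolding pistar_add using mo_add[OF mo pm pm pm] by blast
  qed
qed

theorem mainTheorem14:
  fixes n :: nat
    and ord :: "mon \<Rightarrow> mon \<Rightarrow> bool"
    and ps :: "('a::field) list list"
    and es :: "nat list"
  assumes ord: "monomial_order n ord"
    and pts: "\<forall>p\<in>set ps. length p = n"
    and dist: "distinct ps"
    and es_vars: "set es \<subseteq> {..<n}"
    and es_dist: "distinct es"
    and suppB: "supp (std_mons n ord (vanishing_ideal n (set ps))) \<subseteq> set es"
    and card_le: "length es + 1 \<le> length ps" "length es \<le> n"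
    and rank: "vec_space.rank (length es) (eval_matrix es ps) = length es"
  shows "pistar_mon es `
           std_mons (length es) (pulled_order es ord)
             (vanishing_ideal (length es) (proj es ` set ps))
         = std_mons n ord (vanishing_ideal n (set ps))"
proof -
  let ?k = "length es"
  define P where "P = set ps"
  define Q where "Q = proj es ` P"
  define ord' where "ord' = pulled_order es ord"
  define B where "B = std_mons n ord (vanishing_ideal n P :: 'a mpoly set)"
  define B' where "B' = std_mons ?k ord' (vanishing_ideal ?k Q :: 'a mpoly set)"
  have mo': "monomial_order ?k ord'" unfolding ord'_def by (rule pulled_mo[OF ord es_vars es_dist])
  have Bc: "B = {\<alpha> \<in> mons n. evm P \<alpha> \<notin> lspan (evm P ` {\<beta> \<in> mons n. ord \<beta> \<alpha>})}"
    unfolding B_def by (rule std_char[OF ord])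
  have B'c: "B' = {a \<in> mons ?k. evm Q a \<notin> lspan (evm Q ` {b \<in> mons ?k. ord' b a})}"
    unfolding B'_def by (rule std_char[OF mo'])
  have pm: "\<And>a. pistar_mon es a \<in> mons n" using pistar_mons[OF es_vars] .
  have ordeq: "\<And>a b. ord' a b = ord (pistar_mon es a) (pistar_mon es b)" unfolding ord'_def pulled_order_def ..
  define \<Phi> :: "('a list \<Rightarrow> 'a) \<Rightarrow> 'a list \<Rightarrow> 'a" where "\<Phi> = (\<lambda>v p. if p \<in> P then v (proj es p) else 0)"
  have lin: "\<And>c v w. \<Phi> (\<lambda>q. c * v q + w q) = (\<lambda>p. c * \<Phi> v p + \<Phi> w p)"
    by (auto simp: \<Phi>_def fun_eq_iff)
  have z: "\<Phi> (\<lambda>_. 0) = (\<lambda>_. 0)" by (auto simp: \<Phi>_def fun_eq_iff)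
  have PhiEv: "\<And>a. a \<in> mons ?k \<Longrightarrow> \<Phi> (evm Q a) = evm P (pistar_mon es a)"
    by (auto simp: \<Phi>_def evm_def Q_def fun_eq_iff eval_pistar[OF es_dist])
  have supp_es: "\<And>\<gamma>. \<gamma> \<in> B \<Longrightarrow> Poly_Mapping.keys \<gamma> \<subseteq> set es"
    using suppB unfolding B_def P_def supp_def by blast
  have Bm: "B \<subseteq> mons n" unfolding Bc by blast

  have sub1: "B \<subseteq> pistar_mon es ` B'"
  proof
    fix \<alpha> assume aB: "\<alpha> \<in> B"
    obtain a where a: "a \<in> mons ?k" "pistar_mon es a = \<alpha>" using pistar_surj[OF es_dist supp_es[OF aB]] by blast
    have "a \<in> B'"
    proof (rule ccontr)
      assume "a \<notin> B'"
      then have red: "evm Q a \<in> lspan (evm Q ` {b \<in> mons ?k. ord' b a})" using a(1) unfolding B'c by blast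
      have "\<Phi> (evm Q a) \<in> lspan (\<Phi> ` evm Q ` {b \<in> mons ?k. ord' b a})"
        by (rule lspan_image[OF lin z red])
      then have L1: "evm P \<alpha> \<in> lspan (\<Phi> ` evm Q ` {b \<in> mons ?k. ord' b a})"
        using PhiEv[OF a(1)] a(2) by simp
      have S1: "\<Phi> ` evm Q ` {b \<in> mons ?k. ord' b a} \<subseteq> evm P ` {\<beta> \<in> mons n. ord \<beta> \<alpha>}"
      proof
        fix u assume "u \<in> \<Phi> ` evm Q ` {b \<in> mons ?k. ord' b a}"
        then obtain b where b: "b \<in> mons ?k" "ord' b a" "u = \<Phi> (evm Q b)" by blast
        then have "u = evm P (pistar_mon es b)" using PhiEv by simp
        moreover have "ord (pistar_mon es b) \<alpha>" using b(2) a(2) ordeq by simp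
        ultimately show "u \<in> evm P ` {\<beta> \<in> mons n. ord \<beta> \<alpha>}" using pm by blast
      qed
      have "evm P \<alpha> \<in> lspan (evm P ` {\<beta> \<in> mons n. ord \<beta> \<alpha>})"
        using lspan_mono[OF S1] L1 by (rule subsetD)
      then show False using aB unfolding Bc by blast
    qed
    then show "\<alpha> \<in> pistar_mon es ` B'" using a(2) by blast
  qed

  have sub2: "pistar_mon es ` B' \<subseteq> B"
  proof
    fix \<alpha> assume "\<alpha> \<in> pistar_mon es ` B'"
    then obtain a where aB': "a \<in> B'" and a\<alpha>: "\<alpha> = pistar_mon es a" by blast
    have am: "a \<in> mons ?k" using aB' unfolding B'c by blast
    show "\<alpha> \<in> B"
    proof (rule ccontr)
      assume "\<alpha> \<notin> B"
      then have red: "evm P \<alpha> \<in> lspan (evm P ` {\<beta> \<in> mons n. ord \<beta> \<alpha>})"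
        using pm a\<alpha> unfolding Bc by blast
      have "evm P ` {\<beta> \<in> mons n. ord \<beta> \<alpha>} \<subseteq> lspan (evm P ` {\<gamma> \<in> B. ord \<gamma> \<alpha>})"
      proof
        fix u assume "u \<in> evm P ` {\<beta> \<in> mons n. ord \<beta> \<alpha>}"
        then obtain \<beta> where b: "\<beta> \<in> mons n" "ord \<beta> \<alpha>" "u = evm P \<beta>" by blast
        have S: "evm P \<beta> \<in> lspan (evm P ` {\<gamma> \<in> B. \<gamma> = \<beta> \<or> ord \<gamma> \<beta>})"
          using std_span[OF ord b(1), of P] unfolding B_def .
        have sub: "{\<gamma> \<in> B. \<gamma> = \<beta> \<or> ord \<gamma> \<beta>} \<subseteq> {\<gamma> \<in> B. ord \<gamma> \<alpha>}"
        proof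
          fix \<gamma> assume g: "\<gamma> \<in> {\<gamma> \<in> B. \<gamma> = \<beta> \<or> ord \<gamma> \<beta>}"
          then have gm: "\<gamma> \<in> mons n" using Bm by blast
          have "ord \<gamma> \<alpha>"
          proof (cases "\<gamma> = \<beta>")
            case True then show ?thesis using b(2) by simp
          next
            case False
            then have "ord \<gamma> \<beta>" using g by simp
            then show ?thesis using mo_trans[OF ord gm b(1) pm] b(2) a\<alpha> by simp
          qed
          then show "\<gamma> \<in> {\<gamma> \<in> B. ord \<gamma> \<alpha>}" using g by simp
        qed
        have "lspan (evm P ` {\<gamma> \<in> B. \<gamma> = \<beta> \<or> ord \<gamma> \<beta>}) \<subseteq> lspan (evm P ` {\<gamma> \<in> B. ord \<gamma> \<alpha>})"
          by (rule lspan_mono, rule image_mono, rule sub)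
        then show "u \<in> lspan (evm P ` {\<gamma> \<in> B. ord \<gamma> \<alpha>})" using S b(3) by (simp add: subset_iff)
      qed
      then have "lspan (evm P ` {\<beta> \<in> mons n. ord \<beta> \<alpha>}) \<subseteq> lspan (evm P ` {\<gamma> \<in> B. ord \<gamma> \<alpha>})"
        by (rule lspan_trans)
      with red have red2: "evm P \<alpha> \<in> lspan (evm P ` {\<gamma> \<in> B. ord \<gamma> \<alpha>})" by (rule rev_subsetD)
      have "evm P ` {\<gamma> \<in> B. ord \<gamma> \<alpha>} \<subseteq> \<Phi> ` evm Q ` {b \<in> mons ?k. ord' b a}"
      proof
        fix u assume "u \<in> evm P ` {\<gamma> \<in> B. ord \<gamma> \<alpha>}"
        then obtain \<gamma> where g: "\<gamma> \<in> B" "ord \<gamma> \<alpha>" "u = evm P \<gamma>" by blast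
        obtain b where b: "b \<in> mons ?k" "pistar_mon es b = \<gamma>" using pistar_surj[OF es_dist supp_es[OF g(1)]] by blast
        have "ord' b a" using ordeq b(2) g(2) a\<alpha> by simp
        moreover have "u = \<Phi> (evm Q b)" using PhiEv[OF b(1)] b(2) g(3) by simp
        ultimately show "u \<in> \<Phi> ` evm Q ` {b \<in> mons ?k. ord' b a}" using b(1) by blast
      qed
      then have "lspan (evm P ` {\<gamma> \<in> B. ord \<gamma> \<alpha>}) \<subseteq> lspan (\<Phi> ` evm Q ` {b \<in> mons ?k. ord' b a})"
        by (rule lspan_mono)
      with red2 have "evm P \<alpha> \<in> lspan (\<Phi> ` evm Q ` {b \<in> mons ?k. ord' b a})" by (rule rev_subsetD)
      then have "\<exists>v\<in>lspan (evm Q ` {b \<in> mons ?k. ord' b a}). evm P \<alpha> = \<Phi> v"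
        by (rule lspan_preimage[of \<Phi>, OF lin z])
      then obtain v where v: "v \<in> lspan (evm Q ` {b \<in> mons ?k. ord' b a})" "evm P \<alpha> = \<Phi> v"
        by blast
      have "v = evm Q a"
      proof
        fix q show "v q = evm Q a q"
        proof (cases "q \<in> Q")
          case True
          then obtain p where p: "p \<in> P" "q = proj es p" unfolding Q_def by blast
          have "v q = \<Phi> v p" using p by (simp add: \<Phi>_def)
          also have "\<dots> = evm P \<alpha> p" using v(2) by simp
          also have "\<dots> = \<Phi> (evm Q a) p" using PhiEv[OF am] a\<alpha> by simp
          also have "\<dots> = evm Q a q" using p by (simp add: \<Phi>_def)
          finally show ?thesis .
        next
          case False
          have "v q = 0"
            by (rule lspan_vanish[OF v(1) _ False]) (auto simp: evm_def)
          then show ?thesis using False by (simp add: evm_def)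
        qed
      qed
      then have "evm Q a \<in> lspan (evm Q ` {b \<in> mons ?k. ord' b a})" using v(1) by simp
      then show False using aB' unfolding B'c by blast
    qed
  qed
  show ?thesis using sub1 sub2 unfolding B_def B'_def P_def Q_def ord'_def by blast
qed

end
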